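(* (i) Let $q,n,s$ be nonnegative integers with $q \ge 3$, $n \ge 1$, $0 \le s \le n-1$ and $s$ even. Then the minimum of $\kappa^*(A_{q,n,s-2b,b})$ over integers $0 \le b \le s/2$ is attained at \[ b = \begin{cases} s/2 & \text{if } s \le \frac{2}{q}(n-1),\\ \left\lfloor \frac{n-1-s}{q-2}\right\rfloor & \text{if } s \ge \frac{2}{q}(n-1).\end{cases} \] (ii) Let $q \ge 3$ and $\delta$ with $\frac{2}{q} \le \delta \le 1$ be fixed, and for each $n$ let $s = s_n$ be an even integer with $0 \le s_n \le n$ and $s_n / n \to \delta$. Then \[ \lim_{n\to\infty} \frac{1}{n}\log \min_{0 \le b \le s_n/2} \kappa^*(A_{q,n,s_n-2b,b}) = (1-\delta)\log(q-1). \]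
   Context: For integers $q \ge 2$, $n \ge 1$, $0 \le a \le n$, $b \ge 0$, the channel $A_{q,n,a,b}$ has input set $[q]^n$ ($[q]=\{0,\dots,q-1\}$) and output set the strings $y \in ([q]\cup\{*\})^n$ with exactly $a$ positions equal to the erasure symbol $*$; $(A_{q,n,a,b})_{x,y}=1$ iff $|\{i : y_i\ne *,\ y_i \ne x_i\}| \le b$ ($a$ erasures and at most $b$ substitutions). For $A \in \{0,1\}^{X\times Y}$, $\kappa^*(A) = \min\{\mathbf{1}^T z : z \in \mathbb{R}^Y,\ z\ge\mathbf{0},\ Az \ge\mathbf{1}\}$. The logarithm is to any fixed base (the same on both sides). *)

theory Defs
  imports "HOL-Analysis.Analysis"
begin

definition kappa_star :: "'x set \<Rightarrow> 'y set \<Rightarrow> ('x \<Rightarrow> 'y \<Rightarrow> bool) \<Rightarrow> real" where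
  "kappa_star X Y A = Inf {(\<Sum>y\<in>Y. z y) | z :: 'y \<Rightarrow> real.
       (\<forall>y\<in>Y. 0 \<le> z y) \<and> (\<forall>x\<in>X. (\<Sum>y\<in>{y\<in>Y. A x y}. z y) \<ge> 1)}"

definition chan_inputs :: "nat \<Rightarrow> nat \<Rightarrow> nat list set" where
  "chan_inputs q n = {x. length x = n \<and> (\<forall>i<n. x ! i < q)}"

text \<open>Output set: words of length n over [q] plus the erasure symbol (None),
  with exactly a erasures.\<close>
definition chan_outputs :: "nat \<Rightarrow> nat \<Rightarrow> nat \<Rightarrow> nat option list set" where
  "chan_outputs q n a = {y. length y = n \<and> (\<forall>i<n. \<forall>v. y ! i = Some v \<longrightarrow> v < q)
        \<and> card {i. i < n \<and> y ! i = None} = a}"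

definition chan_entry :: "nat \<Rightarrow> nat list \<Rightarrow> nat option list \<Rightarrow> bool" where
  "chan_entry b x y = (card {i. i < length y \<and> y ! i \<noteq> None \<and> y ! i \<noteq> Some (x ! i)} \<le> b)"

definition kappaA :: "nat \<Rightarrow> nat \<Rightarrow> nat \<Rightarrow> nat \<Rightarrow> real" where
  "kappaA q n a b = kappa_star (chan_inputs q n) (chan_outputs q n a) (chan_entry b)"

end

theory Submission
  imports Defs "HOL-Real_Asymp.Real_Asymp"
begin


lemma card_less_Suc_split:
  "card {i. i < Suc n \<and> P i} = (if P 0 then 1 else 0) + card {i. i < n \<and> P (Suc i)}"
proof -
  have e: "{i. i < Suc n \<and> P i} = (if P 0 then {0} else {}) \<union> Suc ` {i. i < n \<and> P (Suc i)}"
    by (auto simp: less_Suc_eq_0_disj)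
  have "card ((if P 0 then {0} else {}) \<union> Suc ` {i. i < n \<and> P (Suc i)}) =
        card (if P 0 then {0::nat} else {}) + card (Suc ` {i. i < n \<and> P (Suc i)})"
    by (rule card_Un_disjoint) auto
  also have "card (Suc ` {i. i < n \<and> P (Suc i)}) = card {i. i < n \<and> P (Suc i)}"
    by (rule card_image) auto
  finally show ?thesis using e by simp
qed

lemma chan_inputs_alt: "chan_inputs q n = {xs. set xs \<subseteq> {..<q} \<and> length xs = n}"
  unfolding chan_inputs_def by (auto simp: subset_iff in_set_conv_nth)

lemma finite_chan_inputs: "finite (chan_inputs q n)"
  unfolding chan_inputs_alt by (rule finite_lists_length_eq) simp

lemma card_chan_inputs: "card (chan_inputs q n) = q ^ n"
  unfolding chan_inputs_alt by (subst card_lists_length_eq) simp_all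

lemma card_cons_split:
  "card {x \<in> chan_inputs q (Suc n). R x} = (\<Sum>a<q. card {x \<in> chan_inputs q n. R (a # x)})"
proof -
  have e: "{x \<in> chan_inputs q (Suc n). R x} = (\<Union>a\<in>{..<q}. Cons a ` {x \<in> chan_inputs q n. R (a # x)})"
  proof (intro equalityI subsetI)
    fix x assume "x \<in> {x \<in> chan_inputs q (Suc n). R x}"
    then obtain a x' where x: "x = a # x'" "length x' = n" "a < q" "\<forall>i<n. x' ! i < q" "R x"
      unfolding chan_inputs_def by (auto simp: length_Suc_conv) (metis nth_Cons_0 nth_Cons_Suc zero_less_Suc Suc_mono)
    then show "x \<in> (\<Union>a\<in>{..<q}. Cons a ` {x \<in> chan_inputs q n. R (a # x)})"
      unfolding chan_inputs_def by auto
  next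
    fix x assume "x \<in> (\<Union>a\<in>{..<q}. Cons a ` {x \<in> chan_inputs q n. R (a # x)})"
    then show "x \<in> {x \<in> chan_inputs q (Suc n). R x}"
      unfolding chan_inputs_def by (auto simp: less_Suc_eq_0_disj)
  qed
  have "card (\<Union>a\<in>{..<q}. Cons a ` {x \<in> chan_inputs q n. R (a # x)}) =
       (\<Sum>a<q. card (Cons a ` {x \<in> chan_inputs q n. R (a # x)}))"
    by (rule card_UN_disjoint) (auto intro: finite_subset[OF _ finite_chan_inputs])
  also have "\<dots> = (\<Sum>a<q. card {x \<in> chan_inputs q n. R (a # x)})"
    by (intro sum.cong refl card_image) auto
  finally show ?thesis using e by simp
qed

definition vol :: "nat \<Rightarrow> nat \<Rightarrow> nat \<Rightarrow> nat" where
  "vol q m b = (\<Sum>j\<le>b. (m choose j) * (q - 1) ^ j)"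

lemma vol_0: "vol q 0 b = 1"
  unfolding vol_def by (induction b) auto

lemma vol_b0: "vol q m 0 = 1"
  unfolding vol_def by simp

lemma sum_choose_Suc:
  "(\<Sum>j\<le>Suc b. (Suc m choose j) * (r::nat) ^ j) = (\<Sum>j\<le>Suc b. (m choose j) * r ^ j) + r * (\<Sum>j\<le>b. (m choose j) * r ^ j)"
proof -
  have "(\<Sum>j\<le>Suc b. (Suc m choose j) * r ^ j) = 1 + (\<Sum>j\<le>b. (Suc m choose Suc j) * r ^ Suc j)"
    by (subst sum.atMost_Suc_shift) simp
  also have "\<dots> = 1 + (\<Sum>j\<le>b. (m choose Suc j) * r ^ Suc j) + r * (\<Sum>j\<le>b. (m choose j) * r ^ j)"
    by (simp add: sum.distrib sum_distrib_left algebra_simps)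
  also have "1 + (\<Sum>j\<le>b. (m choose Suc j) * r ^ Suc j) = (\<Sum>j\<le>Suc b. (m choose j) * r ^ j)"
    by (subst sum.atMost_Suc_shift) simp
  finally show ?thesis .
qed

lemma vol_Suc_Suc: "vol q (Suc m) (Suc b) = vol q m (Suc b) + (q - 1) * vol q m b"
  unfolding vol_def by (rule sum_choose_Suc)

lemma vol_pos: "vol q m b \<ge> 1"
proof -
  have "(m choose 0) * (q - 1) ^ 0 \<le> vol q m b"
    unfolding vol_def by (rule member_le_sum) auto
  then show ?thesis by simp
qed

definition mis :: "nat list \<Rightarrow> nat option list \<Rightarrow> nat" where
  "mis x u = card {i. i < length u \<and> u ! i \<noteq> None \<and> u ! i \<noteq> Some (x ! i)}"

definition nn :: "nat option list \<Rightarrow> nat" where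
  "nn u = card {i. i < length u \<and> u ! i = None}"

lemma mis_Cons: "mis (a # x) (c # u) = (if c \<noteq> None \<and> c \<noteq> Some a then 1 else 0) + mis x u"
  unfolding mis_def by (simp add: card_less_Suc_split)

lemma nn_Cons: "nn (c # u) = (if c = None then 1 else 0) + nn u"
  unfolding nn_def by (simp add: card_less_Suc_split)

lemma nn_le: "nn u \<le> length u"
proof -
  have "nn u \<le> card {..<length u}" unfolding nn_def by (rule card_mono) auto
  then show ?thesis by simp
qed

lemma sum_if_one:
  assumes "v < q"
  shows "(\<Sum>a<q. if a = v then A else B) = A + (q - 1) * (B::nat)"
proof -
  have "(\<Sum>a<q. if a = v then A else B) = (if v = v then A else B) + (\<Sum>a\<in>{..<q} - {v}. if a = v then A else B)"
    using assms by (subst sum.remove[of _ v]) auto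
  also have "(\<Sum>a\<in>{..<q} - {v}. if a = v then A else B) = (\<Sum>a\<in>{..<q} - {v}. B)"
    by (rule sum.cong) auto
  also have "\<dots> = (q - 1) * B" using assms by simp
  finally show ?thesis by simp
qed

lemma ball_card:
  assumes "\<forall>i<length u. \<forall>v. u ! i = Some v \<longrightarrow> v < q"
  shows "card {x \<in> chan_inputs q (length u). mis x u \<le> b} = q ^ nn u * vol q (length u - nn u) b"
  using assms
proof (induction u arbitrary: b)
  case Nil
  have "chan_inputs q 0 = {[]}" unfolding chan_inputs_def by auto
  then show ?case by (simp add: mis_def nn_def vol_0)
next
  case (Cons c u)
  have IH: "\<And>b. card {x \<in> chan_inputs q (length u). mis x u \<le> b} = q ^ nn u * vol q (length u - nn u) b"
    using Cons.IH Cons.prems by (metis Suc_mono length_Cons nth_Cons_Suc)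
  have le: "nn u \<le> length u" by (rule nn_le)
  have "card {x \<in> chan_inputs q (length (c # u)). mis x (c # u) \<le> b} =
        (\<Sum>a<q. card {x \<in> chan_inputs q (length u). (if c \<noteq> None \<and> c \<noteq> Some a then 1 else 0) + mis x u \<le> b})"
    by (simp add: card_cons_split mis_Cons)
  also have "\<dots> = q ^ nn (c # u) * vol q (length (c # u) - nn (c # u)) b"
  proof (cases c)
    case None
    then show ?thesis using IH by (simp add: nn_Cons)
  next
    case (Some v)
    have vq: "v < q" using Cons.prems Some by force
    have "(\<Sum>a<q. card {x \<in> chan_inputs q (length u). (if c \<noteq> None \<and> c \<noteq> Some a then 1 else 0) + mis x u \<le> b})
        = (\<Sum>a<q. if a = v then q ^ nn u * vol q (length u - nn u) b
                   else (if b = 0 then 0 else q ^ nn u * vol q (length u - nn u) (b - 1)))"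
    proof (intro sum.cong refl)
      fix a assume "a \<in> {..<q}"
      show "card {x \<in> chan_inputs q (length u). (if c \<noteq> None \<and> c \<noteq> Some a then 1 else 0) + mis x u \<le> b} =
        (if a = v then q ^ nn u * vol q (length u - nn u) b
                   else (if b = 0 then 0 else q ^ nn u * vol q (length u - nn u) (b - 1)))"
      proof (cases "a = v")
        case True then show ?thesis using Some IH by simp
      next
        case False
        show ?thesis
        proof (cases b)
          case 0 then show ?thesis using Some False by simp
        next
          case (Suc b')
          have "{x \<in> chan_inputs q (length u). (if c \<noteq> None \<and> c \<noteq> Some a then 1 else 0) + mis x u \<le> b}
             = {x \<in> chan_inputs q (length u). mis x u \<le> b'}" using Some False Suc by auto
          then show ?thesis using IH Suc False by simp
        qed
      qed
    qed
    also have "\<dots> = q ^ nn u * vol q (length u - nn u) b + (q - 1) * (if b = 0 then 0 else q ^ nn u * vol q (length u - nn u) (b - 1))"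
      using vq by (rule sum_if_one)
    also have "\<dots> = q ^ nn u * vol q (Suc (length u - nn u)) b"
      by (cases b) (auto simp: vol_b0 vol_Suc_Suc algebra_simps)
    finally show ?thesis using Some le by (simp add: nn_Cons Suc_diff_le)
  qed
  finally show ?case .
qed



lemma chan_entry_mis: "chan_entry b x y = (mis x y \<le> b)"
  unfolding chan_entry_def mis_def by simp

lemma finite_chan_outputs: "finite (chan_outputs q n a)"
proof -
  have "chan_outputs q n a \<subseteq> {xs. set xs \<subseteq> insert None (Some ` {..<q}) \<and> length xs = n}"
  proof
    fix y assume y: "y \<in> chan_outputs q n a"
    have l: "length y = n" using y unfolding chan_outputs_def by simp
    have st: "set y \<subseteq> insert None (Some ` {..<q})"
    proof
      fix c assume "c \<in> set y"
      then obtain i where i: "i < length y" "y ! i = c" by (auto simp: in_set_conv_nth)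
      then show "c \<in> insert None (Some ` {..<q})" using y unfolding chan_outputs_def by (cases c) auto
    qed
    show "y \<in> {xs. set xs \<subseteq> insert None (Some ` {..<q}) \<and> length xs = n}" using l st by simp
  qed
  then show ?thesis by (rule finite_subset) (intro finite_lists_length_eq, simp)
qed

lemma col_deg:
  assumes "y \<in> chan_outputs q n a"
  shows "card {x \<in> chan_inputs q n. chan_entry b x y} = q ^ a * vol q (n - a) b"
proof -
  have l: "length y = n" and nn: "nn y = a" and v: "\<forall>i<length y. \<forall>v. y ! i = Some v \<longrightarrow> v < q"
    using assms unfolding chan_outputs_def nn_def by auto
  show ?thesis using ball_card[OF v, of b] l nn by (simp add: chan_entry_mis)
qed

definition emb :: "nat \<Rightarrow> nat list \<Rightarrow> nat option list" where
  "emb a w = map Some w @ replicate a None"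

lemma emb_in:
  assumes "w \<in> chan_inputs q (n - a)" "a \<le> n"
  shows "emb a w \<in> chan_outputs q n a"
proof -
  have lw: "length w = n - a" and wq: "\<forall>i<n - a. w ! i < q" using assms unfolding chan_inputs_def by auto
  have "{i. i < n \<and> emb a w ! i = None} = {n - a..<n}"
    using lw assms(2) by (auto simp: emb_def nth_append)
  then show ?thesis using lw wq assms(2) unfolding chan_outputs_def emb_def
    by (auto simp: nth_append split: if_splits)
qed

lemma inj_emb: "inj (emb a)"
  unfolding emb_def by (rule injI) (simp add: inj_map_eq_map[of Some])

lemma mis_emb:
  assumes "length w = n - a" "length x = n" "a \<le> n"
  shows "mis x (emb a w) = mis w (map Some (take (n - a) x))"
proof -
  have "{i. i < length (emb a w) \<and> emb a w ! i \<noteq> None \<and> emb a w ! i \<noteq> Some (x ! i)}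
      = {i. i < n - a \<and> w ! i \<noteq> x ! i}"
  proof (intro equalityI subsetI)
    fix i assume i: "i \<in> {i. i < length (emb a w) \<and> emb a w ! i \<noteq> None \<and> emb a w ! i \<noteq> Some (x ! i)}"
    have "i < n - a"
    proof (rule ccontr)
      assume "\<not> i < n - a"
      moreover have "i < n" using i assms by (simp add: emb_def)
      then have "i + a - n < a" using \<open>\<not> i < n - a\<close> by linarith
      ultimately have "emb a w ! i = None" using i assms by (simp add: emb_def nth_append)
      then show False using i by simp
    qed
    then show "i \<in> {i. i < n - a \<and> w ! i \<noteq> x ! i}" using i assms by (simp add: emb_def nth_append)
  next
    fix i assume "i \<in> {i. i < n - a \<and> w ! i \<noteq> x ! i}"
    then show "i \<in> {i. i < length (emb a w) \<and> emb a w ! i \<noteq> None \<and> emb a w ! i \<noteq> Some (x ! i)}"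
      using assms by (simp add: emb_def nth_append) linarith
  qed
  moreover have "{i. i < length (map Some (take (n - a) x)) \<and> map Some (take (n - a) x) ! i \<noteq> None
          \<and> map Some (take (n - a) x) ! i \<noteq> Some (w ! i)} = {i. i < n - a \<and> w ! i \<noteq> x ! i}"
    using assms by auto
  ultimately show ?thesis unfolding mis_def by simp
qed

lemma row_deg0:
  assumes "x \<in> chan_inputs q n" "a \<le> n"
  shows "card {y \<in> emb a ` chan_inputs q (n - a). chan_entry b x y} = vol q (n - a) b"
proof -
  define u where "u = map Some (take (n - a) x)"
  have lx: "length x = n" and xq: "\<forall>i<n. x ! i < q" using assms unfolding chan_inputs_def by auto
  have lu: "length u = n - a" using lx assms(2) unfolding u_def by simp
  have nnu: "nn u = 0" unfolding nn_def u_def by simp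
  have uq: "\<forall>i<length u. \<forall>v. u ! i = Some v \<longrightarrow> v < q" using xq lu unfolding u_def by auto
  have e: "{y \<in> emb a ` chan_inputs q (n - a). chan_entry b x y} = emb a ` {w \<in> chan_inputs q (n - a). mis w u \<le> b}"
    using mis_emb[OF _ lx assms(2)] unfolding u_def chan_entry_mis by (auto simp: chan_inputs_def)
  have "card (emb a ` {w \<in> chan_inputs q (n - a). mis w u \<le> b}) = card {w \<in> chan_inputs q (n - a). mis w u \<le> b}"
    by (rule card_image) (meson inj_emb inj_on_subset subset_UNIV)
  also have "\<dots> = vol q (n - a) b" using ball_card[OF uq, of b] lu nnu by simp
  finally show ?thesis using e by simp
qed

lemma kappaA_eq:
  assumes "a \<le> n" "q \<ge> 1"
  shows "kappaA q n a b = real (q ^ (n - a)) / real (vol q (n - a) b)"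
proof -
  define X where "X = chan_inputs q n"
  define Y where "Y = chan_outputs q n a"
  define V where "V = real (vol q (n - a) b)"
  define Y0 where "Y0 = emb a ` chan_inputs q (n - a)"
  have Vpos: "V > 0" unfolding V_def using vol_pos[of q "n-a" b] by simp
  have fX: "finite X" unfolding X_def by (rule finite_chan_inputs)
  have fY: "finite Y" unfolding Y_def by (rule finite_chan_outputs)
  have Y0Y: "Y0 \<subseteq> Y" unfolding Y0_def Y_def using emb_in assms by auto
  have cY0: "card Y0 = q ^ (n - a)" unfolding Y0_def
    by (subst card_image) (auto simp: card_chan_inputs intro: inj_on_subset[OF inj_emb])
  define S where "S = {(\<Sum>y\<in>Y. z y) | z :: nat option list \<Rightarrow> real.
       (\<forall>y\<in>Y. 0 \<le> z y) \<and> (\<forall>x\<in>X. (\<Sum>y\<in>{y\<in>Y. chan_entry b x y}. z y) \<ge> 1)}"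
  have kS: "kappaA q n a b = Inf S" unfolding kappaA_def kappa_star_def S_def X_def Y_def by simp
  define z0 where "z0 = (\<lambda>y. if y \<in> Y0 then 1 / V else 0)"
  have mem: "real (q ^ (n - a)) / V \<in> S"
  proof -
    have "(\<Sum>y\<in>Y. z0 y) = (\<Sum>y\<in>Y0. 1 / V)"
      unfolding z0_def using fY Y0Y by (simp add: sum.If_cases Int_absorb1)
    also have "\<dots> = real (q ^ (n - a)) / V" using cY0 by simp
    finally have s: "(\<Sum>y\<in>Y. z0 y) = real (q ^ (n - a)) / V" .
    have f: "(\<Sum>y\<in>{y\<in>Y. chan_entry b x y}. z0 y) \<ge> 1" if "x \<in> X" for x
    proof -
      have ee: "{y\<in>Y. chan_entry b x y} \<inter> Y0 = {y\<in>Y0. chan_entry b x y}" using Y0Y by blast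
      have "(\<Sum>y\<in>{y\<in>Y. chan_entry b x y}. z0 y) = (\<Sum>y\<in>{y\<in>Y. chan_entry b x y} \<inter> Y0. 1 / V)"
        unfolding z0_def using fY by (simp add: sum.If_cases)
      also have "\<dots> = (\<Sum>y\<in>{y\<in>Y0. chan_entry b x y}. 1 / V)" using ee by simp
      also have "\<dots> = 1" using row_deg0[of x q n a b] that assms Vpos
        unfolding X_def Y0_def V_def by simp
      finally show ?thesis by simp
    qed
    show ?thesis unfolding S_def using s f Vpos by (auto simp: z0_def intro!: exI[of _ z0])
  qed
  have lb: "real (q ^ (n - a)) / V \<le> t" if "t \<in> S" for t
  proof -
    obtain z where t: "t = (\<Sum>y\<in>Y. z y)" and z0: "\<forall>y\<in>Y. 0 \<le> z y"
      and cov: "\<forall>x\<in>X. (\<Sum>y\<in>{y\<in>Y. chan_entry b x y}. z y) \<ge> 1"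
      using \<open>t \<in> S\<close> unfolding S_def by blast
    have "real (card X) = (\<Sum>x\<in>X. 1)" by simp
    also have "\<dots> \<le> (\<Sum>x\<in>X. \<Sum>y\<in>{y\<in>Y. chan_entry b x y}. z y)" using cov by (intro sum_mono) auto
    also have "\<dots> = (\<Sum>x\<in>X. \<Sum>y\<in>Y. if chan_entry b x y then z y else 0)"
      using fY by (simp add: sum.inter_filter)
    also have "\<dots> = (\<Sum>y\<in>Y. \<Sum>x\<in>X. if chan_entry b x y then z y else 0)" by (rule sum.swap)
    also have "\<dots> = (\<Sum>y\<in>Y. z y * real (q ^ a) * V)"
    proof (rule sum.cong[OF refl])
      fix y assume y: "y \<in> Y"
      have "(\<Sum>x\<in>X. if chan_entry b x y then z y else 0) = (\<Sum>x\<in>{x\<in>X. chan_entry b x y}. z y)"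
        by (rule sum.inter_filter[OF fX, symmetric])
      also have "\<dots> = z y * real (card {x\<in>X. chan_entry b x y})" by simp
      also have "card {x\<in>X. chan_entry b x y} = q ^ a * vol q (n - a) b"
        using col_deg y unfolding X_def Y_def by simp
      finally show "(\<Sum>x\<in>X. if chan_entry b x y then z y else 0) = z y * real (q ^ a) * V"
        unfolding V_def by simp
    qed
    also have "\<dots> = t * (real (q ^ a) * V)" unfolding t by (simp add: sum_distrib_right mult.assoc)
    finally have "real (q ^ n) \<le> t * (real (q ^ a) * V)" unfolding X_def by (simp add: card_chan_inputs)
    moreover have "real (q ^ n) = real (q ^ (n - a)) * real (q ^ a)"
      using assms by (simp add: power_add[symmetric])
    ultimately have "real (q ^ (n - a)) * real (q ^ a) \<le> t * V * real (q ^ a)" by (simp add: algebra_simps)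
    then show ?thesis using Vpos \<open>q \<ge> 1\<close> by (simp add: divide_simps)
  qed
  have "Inf S = real (q ^ (n - a)) / V" by (rule cInf_eq_minimum[OF mem lb])
  then show ?thesis using kS V_def by simp
qed



definition G :: "nat \<Rightarrow> nat \<Rightarrow> nat \<Rightarrow> real" where
  "G q m b = real (q ^ (m + 2 * b)) / real (vol q (m + 2 * b) b)"

lemma kappa_G:
  assumes "2 * b \<le> s" "s \<le> n" "q \<ge> 1"
  shows "kappaA q n (s - 2 * b) b = G q (n - s) b"
proof -
  have "n - (s - 2 * b) = n - s + 2 * b" using assms by simp
  then show ?thesis using kappaA_eq[of "s - 2 * b" n q b] assms unfolding G_def by simp
qed

lemma choose_ratio: "Suc b * (k choose Suc b) = (k - b) * (k choose b)"
  using binomial_absorption[of b k] binomial_absorb_comp[of k b] by simp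

lemma vol_Suc_b: "vol q k (Suc b) = vol q k b + (k choose Suc b) * (q - 1) ^ Suc b"
  unfolding vol_def by simp

lemma V1:
  assumes "q \<ge> 1"
  shows "real (vol q (Suc k) (Suc b)) = real q * real (vol q k b) + real (k choose Suc b) * (real q - 1) ^ Suc b"
proof -
  have "real (vol q (Suc k) (Suc b)) = real (vol q k b) + real (k choose Suc b) * real (q - 1) ^ Suc b + real (q - 1) * real (vol q k b)"
    using vol_Suc_Suc[of q k b] vol_Suc_b[of q k b] by simp
  then show ?thesis using assms by (simp add: of_nat_diff algebra_simps)
qed

lemma V2:
  assumes "q \<ge> 1"
  shows "real (vol q (Suc k) b) = real q * real (vol q k b) - real (k choose b) * (real q - 1) ^ Suc b"
proof (cases b)
  case 0
  then show ?thesis by (simp add: vol_b0)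
next
  case (Suc c)
  define t where "t = real (k choose Suc c) * (real q - 1) ^ Suc c"
  have eq1: "real (vol q (Suc k) (Suc c)) = real q * real (vol q k c) + t"
    unfolding t_def by (rule V1[OF assms])
  have eq2: "real (vol q k (Suc c)) = real (vol q k c) + t"
    unfolding vol_Suc_b t_def using assms by (simp add: of_nat_diff)
  have e3: "real (k choose Suc c) * (real q - 1) ^ Suc (Suc c) = (real q - 1) * t"
    unfolding t_def by (simp add: algebra_simps)
  show ?thesis unfolding Suc eq1 eq2 e3 by (simp add: algebra_simps)
qed

lemma V3:
  assumes "q \<ge> 1"
  shows "real (Suc b) * (real (vol q (k + 2) (b + 1)) - (real q)^2 * real (vol q k b))
       = (real q - 1) ^ Suc b * real (k choose b) * ((real k - real b) - (real q - 1) * real (Suc b))"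
proof -
  have a: "real (vol q (Suc (Suc k)) (Suc b)) = real (vol q (Suc k) (Suc b)) + (real q - 1) * real (vol q (Suc k) b)"
    unfolding vol_Suc_Suc[of q "Suc k" b] using assms by (simp add: of_nat_diff)
  have c: "real (Suc b) * real (k choose Suc b) = (real k - real b) * real (k choose b)"
  proof (cases "b \<le> k")
    case True
    then show ?thesis using choose_ratio[of b k] by (metis of_nat_diff of_nat_mult)
  next
    case False
    then show ?thesis by (simp add: binomial_eq_0)
  qed
  define W where "W = real (vol q k b)"
  define A where "A = real (k choose Suc b) * (real q - 1) ^ Suc b"
  define Bc where "Bc = real (k choose b) * (real q - 1) ^ Suc b"
  have e1: "real (vol q (Suc k) (Suc b)) = real q * W + A" unfolding W_def A_def by (rule V1[OF assms])
  have e2: "real (vol q (Suc k) b) = real q * W - Bc" unfolding W_def Bc_def by (rule V2[OF assms])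
  have "real (vol q (k + 2) (b + 1)) - (real q)^2 * W = (real q * W + A) + (real q - 1) * (real q * W - Bc) - (real q)^2 * W"
    using a e1 e2 by simp
  also have "\<dots> = A - (real q - 1) * Bc" by (simp add: algebra_simps power2_eq_square)
  finally have e: "real (vol q (k + 2) (b + 1)) - (real q)^2 * W = A - (real q - 1) * Bc" .
  have "real (Suc b) * (A - (real q - 1) * Bc) = (real (Suc b) * real (k choose Suc b)) * (real q - 1) ^ Suc b
       - real (Suc b) * (real q - 1) * real (k choose b) * (real q - 1) ^ Suc b"
    unfolding A_def Bc_def by (simp add: algebra_simps)
  also have "\<dots> = (real q - 1) ^ Suc b * real (k choose b) * ((real k - real b) - (real q - 1) * real (Suc b))"
    unfolding c by (simp add: algebra_simps)
  finally show ?thesis using e unfolding W_def by simp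
qed

lemma G_dec:
  assumes "q \<ge> 3" "(q - 2) * (b + 1) + 1 \<le> m"
  shows "G q m (b + 1) \<le> G q m b"
proof -
  define k where "k = m + 2 * b"
  have q1: "q \<ge> 1" using assms by simp
  have bk: "b \<le> k" unfolding k_def by simp
  have "real ((q - 2) * (b + 1) + 1) \<le> real m" using assms(2) by linarith
  moreover have r2: "real (q - 2) = real q - 2" using assms(1) by (simp add: of_nat_diff)
  moreover have "real ((q - 2) * (b + 1) + 1) = (real q - 2) * (real b + 1) + 1"
    unfolding of_nat_add of_nat_mult r2 by simp
  ultimately have h: "(real q - 2) * (real b + 1) + 1 \<le> real m" by simp
  have "(real k - real b) - (real q - 1) * real (Suc b) \<ge> 0"
    unfolding k_def using h by (simp add: algebra_simps)
  moreover have "(real q - 1) ^ Suc b * real (k choose b) \<ge> 0" using q1 by simp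
  ultimately have "real (Suc b) * (real (vol q (k + 2) (b + 1)) - (real q)^2 * real (vol q k b)) \<ge> 0"
    using V3[OF q1, of b k] by simp
  then have le: "(real q)^2 * real (vol q k b) \<le> real (vol q (k + 2) (b + 1))"
    by (simp add: zero_le_mult_iff)
  have v0: "real (vol q k b) > 0" using vol_pos[of q k b] by simp
  have "G q m (b + 1) = real q ^ (k + 2) / real (vol q (k + 2) (b + 1))"
    unfolding G_def k_def by (simp add: algebra_simps)
  also have "\<dots> \<le> real q ^ (k + 2) / ((real q)^2 * real (vol q k b))"
    using le v0 q1 vol_pos[of q "k+2" "b+1"] by (intro divide_left_mono mult_pos_pos) auto
  also have "\<dots> = G q m b" unfolding G_def k_def using q1 by (simp add: power_add power2_eq_square field_simps)
  finally show ?thesis .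
qed

lemma G_inc:
  assumes "q \<ge> 3" "m \<le> (q - 2) * (b + 1) + 1"
  shows "G q m b \<le> G q m (b + 1)"
proof -
  define k where "k = m + 2 * b"
  have q1: "q \<ge> 1" using assms by simp
  have "real m \<le> real ((q - 2) * (b + 1) + 1)" using assms(2) by linarith
  moreover have r2: "real (q - 2) = real q - 2" using assms(1) by (simp add: of_nat_diff)
  moreover have "real ((q - 2) * (b + 1) + 1) = (real q - 2) * (real b + 1) + 1"
    unfolding of_nat_add of_nat_mult r2 by simp
  ultimately have h: "real m \<le> (real q - 2) * (real b + 1) + 1" by simp
  have "(real k - real b) - (real q - 1) * real (Suc b) \<le> 0"
    unfolding k_def using h by (simp add: algebra_simps)
  moreover have "(real q - 1) ^ Suc b * real (k choose b) \<ge> 0" using q1 by simp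
  ultimately have "real (Suc b) * (real (vol q (k + 2) (b + 1)) - (real q)^2 * real (vol q k b)) \<le> 0"
    using V3[OF q1, of b k] by (simp add: mult_nonneg_nonpos)
  then have le: "real (vol q (k + 2) (b + 1)) \<le> (real q)^2 * real (vol q k b)"
    by (simp add: mult_le_0_iff)
  have v0: "real (vol q (k + 2) (b + 1)) > 0" using vol_pos[of q "k+2" "b+1"] by simp
  have "G q m b = real q ^ (k + 2) / ((real q)^2 * real (vol q k b))"
    unfolding G_def k_def using q1 by (simp add: power_add power2_eq_square field_simps)
  also have "\<dots> \<le> real q ^ (k + 2) / real (vol q (k + 2) (b + 1))"
    using le v0 q1 vol_pos[of q k b] by (intro divide_left_mono mult_pos_pos) auto
  also have "\<dots> = G q m (b + 1)"
    unfolding G_def k_def by (simp add: algebra_simps)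
  finally show ?thesis .
qed

lemma chain_a:
  fixes f :: "nat \<Rightarrow> 'a::preorder"
  assumes "\<forall>j<B. f (Suc j) \<le> f j" "j \<le> B" shows "f B \<le> f j"
  using assms(2)
proof (induction B rule: dec_induct)
  case base then show ?case by simp
next
  case (step n) then show ?case using assms(1) order_trans by blast
qed

lemma chain_b:
  fixes f :: "nat \<Rightarrow> 'a::preorder"
  assumes "\<forall>j\<ge>B. f j \<le> f (Suc j)" "B \<le> j" shows "f B \<le> f j"
  using assms(2)
proof (induction j rule: dec_induct)
  case base then show ?case by simp
next
  case (step n) then show ?case using assms(1) order_trans by blast
qed

lemma chain_c:
  fixes f :: "nat \<Rightarrow> 'a::preorder"
  assumes "\<forall>j<B. f j \<le> f (Suc j)" "j \<le> B" shows "f j \<le> f B"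
  using assms(2)
proof (induction B rule: dec_induct)
  case base then show ?case by simp
next
  case (step n) then show ?case using assms(1) order_trans by blast
qed

lemma chain_d:
  fixes f :: "nat \<Rightarrow> 'a::preorder"
  assumes "\<forall>j\<ge>B. f (Suc j) \<le> f j" "B \<le> j" shows "f j \<le> f B"
  using assms(2)
proof (induction j rule: dec_induct)
  case base then show ?case by simp
next
  case (step n) then show ?case using assms(1) order_trans by blast
qed

lemma G_min:
  assumes "q \<ge> 3" "B \<le> T" "\<forall>b<B. (q - 2) * (b + 1) + 1 \<le> m" "\<forall>b\<ge>B. m \<le> (q - 2) * (b + 1) + 1"
    "b \<le> T"
  shows "G q m B \<le> G q m b"
proof (cases "b \<le> B")
  case True
  show ?thesis by (rule chain_a[OF _ True]) (use G_dec[OF assms(1)] assms(3) in auto)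
next
  case False
  show ?thesis by (rule chain_b) (use G_inc[OF assms(1)] assms(4) False in auto)
qed

lemma part1:
  "\<forall>q n s :: nat. q \<ge> 3 \<and> n \<ge> 1 \<and> s \<le> n - 1 \<and> even s \<longrightarrow>
      (q * s \<le> 2 * (n - 1) \<longrightarrow>
                  (\<forall>b\<le>s div 2. kappaA q n (s - 2 * (s div 2)) (s div 2) \<le> kappaA q n (s - 2 * b) b)) \<and>
      (q * s \<ge> 2 * (n - 1) \<longrightarrow>
         (n - 1 - s) div (q - 2) \<le> s div 2 \<and>
         (\<forall>b\<le>s div 2. kappaA q n (s - 2 * ((n - 1 - s) div (q - 2))) ((n - 1 - s) div (q - 2))
                         \<le> kappaA q n (s - 2 * b) b))"
proof (intro allI impI)
  fix q n s :: nat
  assume A: "q \<ge> 3 \<and> n \<ge> 1 \<and> s \<le> n - 1 \<and> even s"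
  then obtain t where s: "s = 2 * t" by blast
  define p where "p = q - 3"
  have qp: "q = p + 3" unfolding p_def using A by simp
  have q1: "q \<ge> 1" "q \<ge> 3" using A by auto
  have sn: "s \<le> n" using A by linarith
  have kG: "\<And>b. b \<le> s div 2 \<Longrightarrow> kappaA q n (s - 2 * b) b = G q (n - s) b"
    using kappa_G sn q1 s by simp
  have P1: "\<forall>b\<le>s div 2. kappaA q n (s - 2 * (s div 2)) (s div 2) \<le> kappaA q n (s - 2 * b) b"
    if C: "q * s \<le> 2 * (n - 1)"
    proof (intro allI impI)
      fix b assume b: "b \<le> s div 2"
      have H: "\<forall>j<t. (q - 2) * (j + 1) + 1 \<le> n - s"
      proof (intro allI impI)
        fix j assume "j < t"
        then have "(p + 1) * (j + 1) \<le> (p + 1) * t" by (intro mult_le_mono2) simp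
        moreover have "(p+3) * t \<le> n - 1" using C s qp by simp
        ultimately show "(q - 2) * (j + 1) + 1 \<le> n - s" using s qp A by (simp add: algebra_simps)
      qed
      have "G q (n - s) t \<le> G q (n - s) b"
      proof (rule chain_a)
        show "\<forall>j<t. G q (n - s) (Suc j) \<le> G q (n - s) j"
          using G_dec[OF q1(2)] H by simp
        show "b \<le> t" using b s by simp
      qed
      moreover have "kappaA q n (s - 2 * (s div 2)) (s div 2) = G q (n - s) t" using kG[of "s div 2"] s by simp
      moreover have "kappaA q n (s - 2 * b) b = G q (n - s) b" using kG b by simp
      ultimately show "kappaA q n (s - 2 * (s div 2)) (s div 2) \<le> kappaA q n (s - 2 * b) b"
        by simp
    qed
  have P2: "(n - 1 - s) div (q - 2) \<le> s div 2 \<and>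
         (\<forall>b\<le>s div 2. kappaA q n (s - 2 * ((n - 1 - s) div (q - 2))) ((n - 1 - s) div (q - 2))
                         \<le> kappaA q n (s - 2 * b) b)"
    if C: "q * s \<ge> 2 * (n - 1)"
  proof -
    define B where "B = (n - 1 - s) div (q - 2)"
    have dm1: "(q - 2) * B \<le> n - 1 - s" unfolding B_def by (rule times_div_less_eq_dividend)
    have "n - 1 - s < (q - 2) + (q - 2) * B" unfolding B_def using q1 by (intro dividend_less_times_div) simp
    then have dm2: "n - 1 - s < (q - 2) * (B + 1)" by (metis mult_Suc_right Suc_eq_plus1)
    note dm = dm1 dm2
    have "(p + 1) * B \<le> (p + 1) * t"
    proof -
      have "(p+3) * t + 1 \<ge> n" using C s qp A by simp
      then have "n - 1 - s \<le> (p + 1) * t" using s by (simp add: algebra_simps)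
      then show ?thesis using dm(1) qp by simp
    qed
    then have Bt: "B \<le> t" using mult_le_cancel1[of "p+1" B t] by simp
    have G1: "(n - 1 - s) div (q - 2) \<le> s div 2" using Bt s B_def by simp
    have G2: "\<forall>b\<le>s div 2. kappaA q n (s - 2 * ((n - 1 - s) div (q - 2))) ((n - 1 - s) div (q - 2))
                         \<le> kappaA q n (s - 2 * b) b"
    proof (intro allI impI)
      fix b assume b: "b \<le> s div 2"
      have "G q (n - s) B \<le> G q (n - s) b"
      proof (rule G_min[OF q1(2), of B t])
        show "B \<le> t" by (rule Bt)
        show "b \<le> t" using b s by simp
        show "\<forall>b<B. (q - 2) * (b + 1) + 1 \<le> n - s"
        proof (intro allI impI)
          fix j assume "j < B"
          then have "(q - 2) * (j + 1) \<le> (q - 2) * B" by (intro mult_le_mono2) simp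
          then show "(q - 2) * (j + 1) + 1 \<le> n - s" using dm(1) A by linarith
        qed
        show "\<forall>b\<ge>B. n - s \<le> (q - 2) * (b + 1) + 1"
        proof (intro allI impI)
          fix j assume "B \<le> j"
          then have "(q - 2) * (B + 1) \<le> (q - 2) * (j + 1)" by (intro mult_le_mono2) simp
          then show "n - s \<le> (q - 2) * (j + 1) + 1" using dm(2) A by linarith
        qed
      qed
      moreover have "kappaA q n (s - 2 * B) B = G q (n - s) B" using kG[of B] Bt s by simp
      moreover have "kappaA q n (s - 2 * b) b = G q (n - s) b" using kG b by simp
      ultimately show "kappaA q n (s - 2 * ((n - 1 - s) div (q - 2))) ((n - 1 - s) div (q - 2))
                         \<le> kappaA q n (s - 2 * b) b"
        unfolding B_def[symmetric] by simp
    qed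
    show ?thesis using G1 G2 by blast
  qed
  show "(q * s \<le> 2 * (n - 1) \<longrightarrow>
                  (\<forall>b\<le>s div 2. kappaA q n (s - 2 * (s div 2)) (s div 2) \<le> kappaA q n (s - 2 * b) b)) \<and>
      (q * s \<ge> 2 * (n - 1) \<longrightarrow>
         (n - 1 - s) div (q - 2) \<le> s div 2 \<and>
         (\<forall>b\<le>s div 2. kappaA q n (s - 2 * ((n - 1 - s) div (q - 2))) ((n - 1 - s) div (q - 2))
                         \<le> kappaA q n (s - 2 * b) b))" using P1 P2 by blast
qed



lemma q_pow_binom: "(q::nat) \<ge> 1 \<Longrightarrow> q ^ k = (\<Sum>i\<le>k. (k choose i) * (q - 1) ^ (k - i))"
proof -
  assume "q \<ge> 1"
  then have "q ^ k = (1 + (q - 1)) ^ k" by simp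
  also have "\<dots> = (\<Sum>i\<le>k. (k choose i) * (q - 1) ^ (k - i))" using binomial_ring[of "1::nat" "q - 1" k] by simp
  finally show ?thesis .
qed

lemma term_le_pow: "(q::nat) \<ge> 1 \<Longrightarrow> j \<le> k \<Longrightarrow> (k choose j) * (q - 1) ^ (k - j) \<le> q ^ k"
proof -
  assume q: "q \<ge> 1" and j: "j \<le> k"
  have "(k choose j) * (q - 1) ^ (k - j) \<le> (\<Sum>i\<le>k. (k choose i) * (q - 1) ^ (k - i))"
    using j by (intro member_le_sum) auto
  then show ?thesis using q_pow_binom[OF q] by simp
qed

lemma G_lower:
  assumes "q \<ge> 2"
  shows "(real q - 1) ^ m / real (b + 1) \<le> G q m b"
proof -
  define k where "k = m + 2 * b"
  have q1: "q \<ge> 1" "q - 1 \<ge> 1" using assms by auto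
  have trm: "(q - 1) ^ m * ((k choose j) * (q - 1) ^ j) \<le> q ^ k" if "j \<le> b" for j
  proof -
    have "(q - 1) ^ m * ((k choose j) * (q - 1) ^ j) = (k choose j) * (q - 1) ^ (m + j)"
      by (simp add: power_add algebra_simps)
    also have "\<dots> \<le> (k choose j) * (q - 1) ^ (k - j)"
      using that q1 unfolding k_def by (intro mult_le_mono2 power_increasing) auto
    also have "\<dots> \<le> q ^ k" using that q1 unfolding k_def by (intro term_le_pow) auto
    finally show ?thesis .
  qed
  have "(q - 1) ^ m * vol q k b = (\<Sum>j\<le>b. (q - 1) ^ m * ((k choose j) * (q - 1) ^ j))"
    unfolding vol_def by (simp add: sum_distrib_left)
  also have "\<dots> \<le> (\<Sum>j\<le>b. q ^ k)" using trm by (intro sum_mono) auto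
  also have "\<dots> = (b + 1) * q ^ k" by simp
  finally have n: "(q - 1) ^ m * vol q k b \<le> (b + 1) * q ^ k" .
  then have "real ((q - 1) ^ m * vol q k b) \<le> real ((b + 1) * q ^ k)" by (simp only: of_nat_le_iff)
  then have r: "(real q - 1) ^ m * real (vol q k b) \<le> real (b + 1) * real q ^ k"
    using q1 by (simp add: of_nat_diff algebra_simps)
  have v0: "real (vol q k b) > 0" using vol_pos[of q k b] by simp
  show ?thesis unfolding G_def k_def[symmetric] using r v0 by (simp add: divide_simps mult.commute)
qed

lemma choose_le_Suc: "k choose j \<le> Suc k choose j"
  by (cases j) auto

lemma vol_mono: "vol q k b \<le> vol q (Suc k) b"
  unfolding vol_def by (intro sum_mono mult_le_mono1 choose_le_Suc)

lemma G_step_m: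
  assumes "q \<ge> 1"
  shows "G q (Suc m) b \<le> real q * G q m b"
proof -
  define k where "k = m + 2 * b"
  have v0: "real (vol q k b) > 0" using vol_pos[of q k b] by simp
  have "real (vol q k b) \<le> real (vol q (Suc k) b)" using vol_mono[of q k b] by simp
  then have "real q ^ Suc k / real (vol q (Suc k) b) \<le> real q ^ Suc k / real (vol q k b)"
    using v0 by (intro divide_left_mono) auto
  then show ?thesis unfolding G_def k_def by simp
qed

lemma G_shift:
  assumes "q \<ge> 1"
  shows "G q (m' + d) b \<le> real q ^ d * G q m' b"
proof (induction d)
  case 0 then show ?case by simp
next
  case (Suc d)
  have "G q (m' + Suc d) b \<le> real q * G q (m' + d) b" using G_step_m[OF assms] by simp
  also have "\<dots> \<le> real q * (real q ^ d * G q m' b)" using Suc by (intro mult_left_mono) auto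
  finally show ?case by simp
qed

definition tt :: "nat \<Rightarrow> nat \<Rightarrow> nat \<Rightarrow> nat" where
  "tt q k j = (k choose j) * (q - 1) ^ (k - j)"

lemma tt_ratio:
  assumes "j < k"
  shows "tt q k (Suc j) * (Suc j * (q - 1)) = tt q k j * (k - j)"
proof -
  have e: "(q - 1) ^ (k - j) = (q - 1) ^ (k - Suc j) * (q - 1)"
    using assms by (metis Suc_diff_Suc power_Suc2)
  have "tt q k (Suc j) * (Suc j * (q - 1)) = (Suc j * (k choose Suc j)) * ((q - 1) ^ (k - Suc j) * (q - 1))"
    unfolding tt_def by (simp add: algebra_simps)
  also have "\<dots> = ((k - j) * (k choose j)) * (q - 1) ^ (k - j)" unfolding choose_ratio e ..
  finally show ?thesis unfolding tt_def by (simp add: algebra_simps)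
qed

lemma G_upper1:
  assumes "q \<ge> 3" "(q - 2) * b \<le> m + 1" "m \<le> (q - 2) * (b + 1) + 1"
  shows "G q m b \<le> real (m + 2 * b + 1) * (real q - 1) ^ m"
proof -
  define k where "k = m + 2 * b"
  have q1: "q \<ge> 1" using assms by simp
  have qq: "(q - 1) = (q - 2) + 1" using assms by simp
  have up: "\<forall>j<b. tt q k j \<le> tt q k (Suc j)"
  proof (intro allI impI)
    fix j assume j: "j < b"
    then have jk: "j < k" unfolding k_def by simp
    have "Suc j * (q - 1) \<le> b * (q - 1)" using j by (intro mult_le_mono1) simp
    also have "\<dots> = (q - 2) * b + b" unfolding qq by (simp add: algebra_simps)
    also have "\<dots> \<le> k - j" using assms(2) j unfolding k_def by simp
    finally have le: "Suc j * (q - 1) \<le> k - j" .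
    have "tt q k j * (k - j) = tt q k (Suc j) * (Suc j * (q - 1))" using tt_ratio[OF jk] by simp
    also have "\<dots> \<le> tt q k (Suc j) * (k - j)" using le by (intro mult_le_mono2)
    finally show "tt q k j \<le> tt q k (Suc j)" using jk by simp
  qed
  have down: "\<forall>j\<ge>b. tt q k (Suc j) \<le> tt q k j"
  proof (intro allI impI)
    fix j assume j: "b \<le> j"
    show "tt q k (Suc j) \<le> tt q k j"
    proof (cases "j < k")
      case False
      then show ?thesis unfolding tt_def by (simp add: binomial_eq_0)
    next
      case jk: True
      have "k - j \<le> m + b" using j unfolding k_def by simp
      also have "\<dots> \<le> (q - 2) * (b + 1) + b + 1" using assms(3) by simp
      also have "\<dots> = (b + 1) * (q - 1)" unfolding qq by (simp add: algebra_simps)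
      also have "\<dots> \<le> Suc j * (q - 1)" using j by (intro mult_le_mono1) simp
      finally have le: "k - j \<le> Suc j * (q - 1)" .
      have "tt q k (Suc j) * (Suc j * (q - 1)) = tt q k j * (k - j)" using tt_ratio[OF jk] by simp
      also have "\<dots> \<le> tt q k j * (Suc j * (q - 1))" using le by (intro mult_le_mono2)
      finally show ?thesis using assms(1) by simp
    qed
  qed
  have mx: "tt q k j \<le> tt q k b" for j
  proof (cases "j \<le> b")
    case True then show ?thesis using chain_c[OF up True] by simp
  next
    case False then show ?thesis using chain_d[OF down] by simp
  qed
  have "q ^ k = (\<Sum>j\<le>k. tt q k j)" unfolding tt_def by (rule q_pow_binom[OF q1])
  also have "\<dots> \<le> (\<Sum>j\<le>k. tt q k b)" using mx by (intro sum_mono) auto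
  also have "\<dots> = (k + 1) * tt q k b" by simp
  finally have a: "q ^ k \<le> (k + 1) * tt q k b" .
  have "tt q k b = (q - 1) ^ m * ((k choose b) * (q - 1) ^ b)"
    unfolding tt_def k_def by (simp add: power_add algebra_simps)
  also have "\<dots> \<le> (q - 1) ^ m * vol q k b"
    unfolding vol_def by (intro mult_le_mono2 member_le_sum) auto
  finally have "q ^ k \<le> (k + 1) * ((q - 1) ^ m * vol q k b)" using a
    by (meson le_trans mult_le_mono2)
  then have "real (q ^ k) \<le> real ((k + 1) * ((q - 1) ^ m * vol q k b))" by (simp only: of_nat_le_iff)
  then have r: "real q ^ k \<le> real (k + 1) * ((real q - 1) ^ m * real (vol q k b))"
    using q1 by (simp add: of_nat_diff algebra_simps)
  have v0: "real (vol q k b) > 0" using vol_pos[of q k b] by simp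
  show ?thesis unfolding G_def k_def[symmetric] using r v0
    by (simp add: divide_simps algebra_simps)
qed



lemma M_bounds:
  fixes q n s :: nat
  assumes q: "q \<ge> 3" and sn: "s \<le> n" and ev: "even s"
  defines "M \<equiv> Min ((\<lambda>b. kappaA q n (s - 2 * b) b) ` {0..s div 2})"
  shows "(real q - 1) ^ (n - s) / real (n + 1) \<le> M"
    and "M \<le> real (n + 1) * (real q - 1) ^ (n - s) * real q ^ ((n - s) - (q - 2) * (s div 2))"
proof -
  obtain t where s: "s = 2 * t" using ev by blast
  define m where "m = n - s"
  define D where "D = m - (q - 2) * t"
  have q1: "q \<ge> 1" "q \<ge> 2" using q by auto
  have r1: "real q - 1 \<ge> 1" using q by simp
  have img: "(\<lambda>b. kappaA q n (s - 2 * b) b) ` {0..s div 2} = (\<lambda>b. G q m b) ` {0..t}"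
    unfolding m_def using s sn q1 by (intro image_cong) (auto intro: kappa_G)
  have Meq: "M = Min ((\<lambda>b. G q m b) ` {0..t})" unfolding M_def img ..
  have fin: "finite ((\<lambda>b. G q m b) ` {0..t})" by simp
  have ne: "(\<lambda>b. G q m b) ` {0..t} \<noteq> {}" by simp
  have tn: "t \<le> n" using s sn by simp
  show "(real q - 1) ^ (n - s) / real (n + 1) \<le> M"
  proof -
    have "M \<in> (\<lambda>b. G q m b) ` {0..t}" unfolding Meq using fin ne by (rule Min_in)
    then obtain b where b: "b \<le> t" "M = G q m b" by auto
    have "(real q - 1) ^ m / real (n + 1) \<le> (real q - 1) ^ m / real (b + 1)"
      using b tn r1 by (intro divide_left_mono) auto
    also have "\<dots> \<le> G q m b" by (rule G_lower[OF q1(2)])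
    finally show ?thesis using b m_def by simp
  qed
  have Mle: "M \<le> G q m b" if "b \<le> t" for b
    unfolding Meq using fin that by (intro Min_le) auto
  have rm: "(real q - 1) ^ m \<ge> 0" using r1 by simp
  have qD: "real q ^ D \<ge> 1" using q1 by simp
  show "M \<le> real (n + 1) * (real q - 1) ^ (n - s) * real q ^ ((n - s) - (q - 2) * (s div 2))"
  proof (cases "m div (q - 2) \<le> t")
    case True
    define b where "b = m div (q - 2)"
    have c1: "(q - 2) * b \<le> m + 1" unfolding b_def using times_div_less_eq_dividend[of "q-2" m] by linarith
    have "m < (q - 2) + (q - 2) * b" unfolding b_def using q by (intro dividend_less_times_div) simp
    then have "m < (q - 2) * (b + 1)" by (metis mult_Suc_right Suc_eq_plus1)
    then have c2: "m \<le> (q - 2) * (b + 1) + 1" by simp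
    have "M \<le> G q m b" using Mle True b_def by simp
    also have "\<dots> \<le> real (m + 2 * b + 1) * (real q - 1) ^ m" by (rule G_upper1[OF q c1 c2])
    also have "\<dots> \<le> real (n + 1) * (real q - 1) ^ m"
      using True b_def s sn m_def rm by (intro mult_right_mono) auto
    also have "\<dots> \<le> real (n + 1) * (real q - 1) ^ m * real q ^ D"
      using mult_left_mono[OF qD, of "real (n + 1) * (real q - 1) ^ m"] rm by simp
    finally show ?thesis unfolding D_def m_def s by simp
  next
    case False
    define m' where "m' = (q - 2) * t"
    have "(q - 2) * t \<le> (q - 2) * (m div (q - 2))" using False by (intro mult_le_mono2) simp
    also have "\<dots> \<le> m" by (rule times_div_less_eq_dividend)
    finally have m'm: "m' \<le> m" unfolding m'_def .
    have Dm: "m = m' + D" unfolding D_def m'_def using m'm m'_def by simp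
    have c1: "(q - 2) * t \<le> m' + 1" unfolding m'_def by simp
    have "(q - 2) * t \<le> (q - 2) * (t + 1)" by (intro mult_le_mono2) simp
    then have c2: "m' \<le> (q - 2) * (t + 1) + 1" unfolding m'_def by simp
    have "M \<le> G q m t" using Mle by simp
    also have "\<dots> \<le> real q ^ D * G q m' t" unfolding Dm by (rule G_shift) (use q in simp)
    also have "\<dots> \<le> real q ^ D * (real (m' + 2 * t + 1) * (real q - 1) ^ m')"
      using G_upper1[OF q c1 c2] by (intro mult_left_mono) auto
    also have "\<dots> \<le> real q ^ D * (real (n + 1) * (real q - 1) ^ m)"
    proof (intro mult_left_mono mult_mono)
      show "real (m' + 2 * t + 1) \<le> real (n + 1)" using m'm s sn m_def by simp
      show "(real q - 1) ^ m' \<le> (real q - 1) ^ m" using r1 m'm by (intro power_increasing) auto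
    qed (use r1 in auto)
    finally show ?thesis unfolding D_def m_def s by (simp add: algebra_simps)
  qed
qed

lemma real_diff_le_max: "real (a - b) \<le> max 0 (real a - real b)"
  by (cases "b \<le> a") (auto simp: of_nat_diff)

lemma ln_n_over_n: "(\<lambda>n. ln (real n + 1) / real n) \<longlonglongrightarrow> 0"
  by real_asymp

lemma part2:
  "\<forall>(q :: nat) (\<delta> :: real) (s :: nat \<Rightarrow> nat) (\<beta> :: real).
      q \<ge> 3 \<and> 2 / real q \<le> \<delta> \<and> \<delta> \<le> 1 \<and>
      (\<forall>n. even (s n) \<and> s n \<le> n) \<and>
      ((\<lambda>n. real (s n) / real n) \<longlonglongrightarrow> \<delta>) \<and>
      \<beta> > 0 \<and> \<beta> \<noteq> 1
      \<longrightarrow>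
      ((\<lambda>n. log \<beta> (Min ((\<lambda>b. kappaA q n (s n - 2 * b) b) ` {0..s n div 2})) / real n)
         \<longlonglongrightarrow> (1 - \<delta>) * log \<beta> (real q - 1))"
proof (intro allI impI)
  fix q :: nat and \<delta> :: real and s :: "nat \<Rightarrow> nat" and \<beta> :: real
  assume A: "q \<ge> 3 \<and> 2 / real q \<le> \<delta> \<and> \<delta> \<le> 1 \<and>
      (\<forall>n. even (s n) \<and> s n \<le> n) \<and>
      ((\<lambda>n. real (s n) / real n) \<longlonglongrightarrow> \<delta>) \<and>
      \<beta> > 0 \<and> \<beta> \<noteq> 1"
  have q: "q \<ge> 3" and d2: "2 / real q \<le> \<delta>" and ev: "\<And>n. even (s n)" and sn: "\<And>n. s n \<le> n"
    and lim: "(\<lambda>n. real (s n) / real n) \<longlonglongrightarrow> \<delta>" and b0: "\<beta> > 0" and b1: "\<beta> \<noteq> 1"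
    using A by auto
  define M where "M n = Min ((\<lambda>b. kappaA q n (s n - 2 * b) b) ` {0..s n div 2})" for n
  define D where "D n = (n - s n) - (q - 2) * (s n div 2)" for n
  define r where "r = real q - 1"
  have r1: "r \<ge> 2" unfolding r_def using q by simp
  have lowM: "r ^ (n - s n) / real (n + 1) \<le> M n" for n
    unfolding M_def r_def by (rule M_bounds(1)[OF q sn ev])
  have upM: "M n \<le> real (n + 1) * r ^ (n - s n) * real q ^ D n" for n
    unfolding M_def r_def D_def by (rule M_bounds(2)[OF q sn ev])
  have Mpos: "M n > 0" for n
    using lowM[of n] r1 by (smt (verit) divide_pos_pos of_nat_0_less_iff zero_less_Suc zero_less_power Suc_eq_plus1)
  define c where "c = (1 - \<delta>) * ln r"
  define lo where "lo n = real (n - s n) / real n * ln r - ln (real n + 1) / real n" for n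
  define hi where "hi n = ln (real n + 1) / real n + real (n - s n) / real n * ln r + real (D n) / real n * ln (real q)" for n
  have lowL: "lo n \<le> ln (M n) / real n" if "n > 0" for n
  proof -
    have "ln (r ^ (n - s n) / real (n + 1)) \<le> ln (M n)"
      using lowM[of n] r1 Mpos[of n] by (subst ln_le_cancel_iff) auto
    moreover have "ln (r ^ (n - s n) / real (n + 1)) = real (n - s n) * ln r - ln (real n + 1)"
      using r1 by (simp add: ln_div ln_realpow add.commute)
    ultimately have "real (n - s n) * ln r - ln (real n + 1) \<le> ln (M n)" by simp
    then show ?thesis unfolding lo_def using that by (simp add: divide_simps diff_divide_distrib[symmetric])
  qed
  have upL: "ln (M n) / real n \<le> hi n" if "n > 0" for n
  proof -
    have "ln (M n) \<le> ln (real (n + 1) * r ^ (n - s n) * real q ^ D n)"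
      using upM[of n] r1 Mpos[of n] q by (subst ln_le_cancel_iff) auto
    moreover have "ln (real (n + 1) * r ^ (n - s n) * real q ^ D n) = ln (real n + 1) + real (n - s n) * ln r + real (D n) * ln (real q)"
      using r1 q by (simp add: ln_mult ln_realpow add.commute)
    ultimately have "ln (M n) \<le> ln (real n + 1) + real (n - s n) * ln r + real (D n) * ln (real q)" by simp
    then show ?thesis unfolding hi_def using that by (simp add: divide_simps add_divide_distrib[symmetric])
  qed
  have lim1: "(\<lambda>n. real (n - s n) / real n) \<longlonglongrightarrow> 1 - \<delta>"
  proof -
    have "(\<lambda>n. 1 - real (s n) / real n) \<longlonglongrightarrow> 1 - \<delta>" by (intro tendsto_intros lim)
    moreover have "\<forall>\<^sub>F n in sequentially. 1 - real (s n) / real n = real (n - s n) / real n"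
      using eventually_gt_at_top[of 0] by eventually_elim (use sn in \<open>simp add: of_nat_diff divide_simps\<close>)
    ultimately show ?thesis by (rule Lim_transform_eventually)
  qed
  have lim3: "(\<lambda>n. real (D n) / real n) \<longlonglongrightarrow> 0"
  proof (rule tendsto_sandwich)
    show "\<forall>\<^sub>F n in sequentially. 0 \<le> real (D n) / real n" by simp
    show "\<forall>\<^sub>F n in sequentially. real (D n) / real n \<le> max 0 (1 - real q / 2 * (real (s n) / real n))"
      using eventually_gt_at_top[of 0]
    proof eventually_elim
      case (elim n)
      obtain t where t: "s n = 2 * t" using ev[of n] by blast
      have "real (D n) \<le> max 0 (real (n - s n) - real ((q - 2) * (s n div 2)))"
        unfolding D_def by (rule real_diff_le_max)
      also have "real (n - s n) - real ((q - 2) * (s n div 2)) = real n - real q * real t"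
        using t sn[of n] q by (simp add: of_nat_diff algebra_simps)
      finally have "real (D n) \<le> max 0 (real n - real q * real t)" .
      then have "real (D n) / real n \<le> max 0 (real n - real q * real t) / real n"
        using elim by (intro divide_right_mono) auto
      also have "\<dots> = max 0 (1 - real q / 2 * (real (s n) / real n))"
        using elim t by (auto simp: max_def divide_simps algebra_simps)
      finally show ?case .
    qed
    show "(\<lambda>n. 0) \<longlonglongrightarrow> (0::real)" by simp
    have "(\<lambda>n. max 0 (1 - real q / 2 * (real (s n) / real n))) \<longlonglongrightarrow> max 0 (1 - real q / 2 * \<delta>)"
      by (intro tendsto_intros lim)
    moreover have "max 0 (1 - real q / 2 * \<delta>) = 0"
      using d2 q by (auto simp: max_def divide_simps algebra_simps)
    ultimately show "(\<lambda>n. max 0 (1 - real q / 2 * (real (s n) / real n))) \<longlonglongrightarrow> 0" by simp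
  qed
  have limL: "(\<lambda>n. ln (M n) / real n) \<longlonglongrightarrow> c"
  proof (rule tendsto_sandwich[of lo _ _ hi])
    show "\<forall>\<^sub>F n in sequentially. lo n \<le> ln (M n) / real n"
      using eventually_gt_at_top[of 0] by eventually_elim (rule lowL)
    show "\<forall>\<^sub>F n in sequentially. ln (M n) / real n \<le> hi n"
      using eventually_gt_at_top[of 0] by eventually_elim (rule upL)
    have "lo \<longlonglongrightarrow> (1 - \<delta>) * ln r - 0"
      unfolding lo_def by (intro tendsto_intros lim1 ln_n_over_n)
    then show "lo \<longlonglongrightarrow> c" unfolding c_def by simp
    have "hi \<longlonglongrightarrow> 0 + (1 - \<delta>) * ln r + 0 * ln (real q)"
      unfolding hi_def by (intro tendsto_intros lim1 ln_n_over_n lim3)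
    then show "hi \<longlonglongrightarrow> c" unfolding c_def by simp
  qed
  have lb: "ln \<beta> \<noteq> 0" using b0 b1 by simp
  have "(\<lambda>n. (ln (M n) / real n) / ln \<beta>) \<longlonglongrightarrow> c / ln \<beta>"
    by (intro tendsto_divide limL tendsto_const lb)
  moreover have "(\<lambda>n. (ln (M n) / real n) / ln \<beta>) = (\<lambda>n. log \<beta> (M n) / real n)"
    by (simp add: log_def mult.commute)
  moreover have "c / ln \<beta> = (1 - \<delta>) * log \<beta> (real q - 1)"
    unfolding c_def r_def log_def by simp
  ultimately show "(\<lambda>n. log \<beta> (Min ((\<lambda>b. kappaA q n (s n - 2 * b) b) ` {0..s n div 2})) / real n)
         \<longlonglongrightarrow> (1 - \<delta>) * log \<beta> (real q - 1)" unfolding M_def by simp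
qed


theorem theorem5:
  shows
  "(\<forall>q n s :: nat. q \<ge> 3 \<and> n \<ge> 1 \<and> s \<le> n - 1 \<and> even s \<longrightarrow>
      (q * s \<le> 2 * (n - 1) \<longrightarrow>
                  (\<forall>b\<le>s div 2. kappaA q n (s - 2 * (s div 2)) (s div 2) \<le> kappaA q n (s - 2 * b) b)) \<and>
      (q * s \<ge> 2 * (n - 1) \<longrightarrow>
         (n - 1 - s) div (q - 2) \<le> s div 2 \<and>
         (\<forall>b\<le>s div 2. kappaA q n (s - 2 * ((n - 1 - s) div (q - 2))) ((n - 1 - s) div (q - 2))
                         \<le> kappaA q n (s - 2 * b) b)))
   \<and>
   (\<forall>(q :: nat) (\<delta> :: real) (s :: nat \<Rightarrow> nat) (\<beta> :: real).
      q \<ge> 3 \<and> 2 / real q \<le> \<delta> \<and> \<delta> \<le> 1 \<and>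
      (\<forall>n. even (s n) \<and> s n \<le> n) \<and>
      ((\<lambda>n. real (s n) / real n) \<longlonglongrightarrow> \<delta>) \<and>
      \<beta> > 0 \<and> \<beta> \<noteq> 1
      \<longrightarrow>
      ((\<lambda>n. log \<beta> (Min ((\<lambda>b. kappaA q n (s n - 2 * b) b) ` {0..s n div 2})) / real n)
         \<longlonglongrightarrow> (1 - \<delta>) * log \<beta> (real q - 1)))"
    using part1 part2 by (rule conjI)

end
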